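(* Let $n\ge3$ and consider an ontological model in which, for each ontic state $\lambda$, there are response functions $\xi(\cdot|M_i,\lambda)$ on $\{0,1\}$ for binary measurements $M_1,\dots,M_n$ and $\xi(\cdot,\cdot|M_{i,i+1},\lambda)$ on $\{0,1\}^2$ for joint measurements $M_{i,i+1}$ ($i=1,\dots,n$, indices mod $n$), satisfying measurement noncontextuality in the form $\sum_{X_{i+1}}\xi(X_i,X_{i+1}|M_{i,i+1},\lambda)=\xi(X_i|M_i,\lambda)$ and $\sum_{X_i}\xi(X_i,X_{i+1}|M_{i,i+1},\lambda)=\xi(X_{i+1}|M_{i+1},\lambda)$ for all $i$ and all outcomes. Let $\eta(M_i,\lambda)=2\max_{X\in\{0,1\}}\xi(X|M_i,\lambda)-1$. Then for odd $n$, $$\xi(\mathrm{anti}|M_*,\lambda)\equiv\frac1n\sum_{i=1}^n\xi(X_i\ne X_{i+1}|M_{i,i+1},\lambda)\le1-\frac1{n^2}\sum_{i=1}^n\eta(M_i,\lambda),$$ and for even $n\ge4$, $$\xi(\mathrm{chained}|M_*,\lambda)\equiv\frac1n\sum_{i=1}^{n-1}\xi(X_i=X_{i+1}|M_{i,i+1},\lambda)+\frac1n\xi(X_n\ne X_1|M_{n1},\lambda)\le1-\frac1{n^2}\sum_{i=1}^n\eta(M_i,\lambda).$$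
   Context: Here $\xi(X_i\neq X_{i+1}|M_{i,i+1},\lambda)=\xi(0,1|M_{i,i+1},\lambda)+\xi(1,0|M_{i,i+1},\lambda)$ and $\xi(X_i=X_{i+1}|M_{i,i+1},\lambda)=\xi(0,0|M_{i,i+1},\lambda)+\xi(1,1|M_{i,i+1},\lambda)$; all response functions are probability distributions. The same bounds hold for any second family of joint measurements $M'_{i,i+1}$ with the same marginal conditions. *)

theory Defs
  imports Complex_Main
begin

text \<open>Measurements are indexed 1..n; outcomes 0/1 are encoded as False/True.
  The cyclic successor: nxt n i = i+1 for i<n and nxt n n = 1.\<close>
definition nxt :: "nat \<Rightarrow> nat \<Rightarrow> nat" where
  "nxt n i = (i mod n) + 1"

text \<open>xi1 i x = xi(x|M_i,lambda);  xi2 i x y = xi(x,y|M_{i,i+1},lambda).\<close>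
definition eta :: "(nat \<Rightarrow> bool \<Rightarrow> real) \<Rightarrow> nat \<Rightarrow> real" where
  "eta xi1 i = 2 * max (xi1 i False) (xi1 i True) - 1"

definition xi_neq :: "(nat \<Rightarrow> bool \<Rightarrow> bool \<Rightarrow> real) \<Rightarrow> nat \<Rightarrow> real" where
  "xi_neq xi2 i = xi2 i False True + xi2 i True False"

definition xi_eq :: "(nat \<Rightarrow> bool \<Rightarrow> bool \<Rightarrow> real) \<Rightarrow> nat \<Rightarrow> real" where
  "xi_eq xi2 i = xi2 i False False + xi2 i True True"

definition xi_anti :: "nat \<Rightarrow> (nat \<Rightarrow> bool \<Rightarrow> bool \<Rightarrow> real) \<Rightarrow> real" where
  "xi_anti n xi2 = (1 / real n) * (\<Sum>i=1..n. xi_neq xi2 i)"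

definition xi_chained :: "nat \<Rightarrow> (nat \<Rightarrow> bool \<Rightarrow> bool \<Rightarrow> real) \<Rightarrow> real" where
  "xi_chained n xi2 = (1 / real n) * (\<Sum>i=1..n-1. xi_eq xi2 i) + (1 / real n) * xi_neq xi2 n"

end

theory Submission
  imports Defs
begin

lemma path_odd:
  fixes a :: "nat \<Rightarrow> real"
  assumes "m \<le> k"
  shows "\<bar>a m - (-1)^(k-m) * a k\<bar> \<le> (\<Sum>j=m..<k. \<bar>a j + a (Suc j)\<bar>)"
  using assms
proof (induction k rule: dec_induct)
  case base then show ?case by simp
next
  case (step k)
  have e: "Suc k - m = Suc (k - m)" using step.hyps by simp
  have "a m - (-1)^(Suc k-m) * a (Suc k) = (a m - (-1)^(k-m) * a k) + (-1)^(k-m) * (a k + a (Suc k))"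
    unfolding e by (simp add: algebra_simps)
  also have "\<bar>\<dots>\<bar> \<le> \<bar>a m - (-1)^(k-m) * a k\<bar> + \<bar>a k + a (Suc k)\<bar>"
    by (rule order_trans[OF abs_triangle_ineq]) (simp add: abs_mult)
  finally show ?case using step.IH step.hyps by simp
qed

lemma path_even:
  fixes a :: "nat \<Rightarrow> real"
  assumes "m \<le> k"
  shows "\<bar>a m - a k\<bar> \<le> (\<Sum>j=m..<k. \<bar>a j - a (Suc j)\<bar>)"
  using assms
proof (induction k rule: dec_induct)
  case base then show ?case by simp
next
  case (step k)
  have "\<bar>a m - a (Suc k)\<bar> \<le> \<bar>a m - a k\<bar> + \<bar>a k - a (Suc k)\<bar>" by simp
  then show ?case using step.IH step.hyps by simp
qed

lemma cyc_odd:
  fixes a :: "nat \<Rightarrow> real"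
  assumes "1 \<le> k" "k \<le> n" "odd n"
  shows "2 * \<bar>a k\<bar> \<le> (\<Sum>j=1..<n. \<bar>a j + a (Suc j)\<bar>) + \<bar>a n + a 1\<bar>"
proof -
  have s: "(\<Sum>j=1..<n. \<bar>a j + a (Suc j)\<bar>) = (\<Sum>j=1..<k. \<bar>a j + a (Suc j)\<bar>) + (\<Sum>j=k..<n. \<bar>a j + a (Suc j)\<bar>)"
    using assms by (simp add: sum.atLeastLessThan_concat)
  have p1: "\<bar>a k - (-1)^(n-k) * a n\<bar> \<le> (\<Sum>j=k..<n. \<bar>a j + a (Suc j)\<bar>)"
    using path_odd assms by blast
  have p2: "\<bar>a 1 - (-1)^(k-1) * a k\<bar> \<le> (\<Sum>j=1..<k. \<bar>a j + a (Suc j)\<bar>)"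
    using path_odd[of 1 k a] assms by blast
  have sg: "(-1::real)^(n-k) * (-1)^(k-1) = 1"
  proof -
    have "(-1::real)^(n-k) * (-1)^(k-1) = (-1)^(n-1)" using assms
      by (simp add: power_add[symmetric])
    also have "\<dots> = 1" using assms by (simp add: odd_pos)
    finally show ?thesis .
  qed
  have "2 * a k = (a k - (-1)^(n-k) * a n) + (-1)^(n-k) * (a n + a 1)
        - (-1)^(n-k) * (a 1 - (-1)^(k-1) * a k)"
    using sg by (simp add: algebra_simps)
  hence "\<bar>2 * a k\<bar> \<le> \<bar>a k - (-1)^(n-k) * a n\<bar> + \<bar>a n + a 1\<bar> + \<bar>a 1 - (-1)^(k-1) * a k\<bar>"
  proof -
    assume h: "2 * a k = (a k - (-1)^(n-k) * a n) + (-1)^(n-k) * (a n + a 1)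
        - (-1)^(n-k) * (a 1 - (-1)^(k-1) * a k)"
    have u: "\<bar>(-1::real)^(n-k) * x\<bar> = \<bar>x\<bar>" for x by (simp add: abs_mult power_abs)
    have "\<bar>2 * a k\<bar> \<le> \<bar>a k - (-1)^(n-k) * a n\<bar> + \<bar>(-1)^(n-k) * (a n + a 1)\<bar> + \<bar>(-1)^(n-k) * (a 1 - (-1)^(k-1) * a k)\<bar>"
      unfolding h by linarith
    then show ?thesis unfolding u .
  qed
  thus ?thesis using p1 p2 s abs_mult[of 2 "a k"] by linarith
qed

lemma cyc_even:
  fixes a :: "nat \<Rightarrow> real"
  assumes "1 \<le> k" "k \<le> n"
  shows "2 * \<bar>a k\<bar> \<le> (\<Sum>j=1..<n. \<bar>a j - a (Suc j)\<bar>) + \<bar>a n + a 1\<bar>"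
proof -
  have s: "(\<Sum>j=1..<n. \<bar>a j - a (Suc j)\<bar>) = (\<Sum>j=1..<k. \<bar>a j - a (Suc j)\<bar>) + (\<Sum>j=k..<n. \<bar>a j - a (Suc j)\<bar>)"
    using assms by (simp add: sum.atLeastLessThan_concat)
  have p1: "\<bar>a k - a n\<bar> \<le> (\<Sum>j=k..<n. \<bar>a j - a (Suc j)\<bar>)"
    using path_even assms by blast
  have p2: "\<bar>a 1 - a k\<bar> \<le> (\<Sum>j=1..<k. \<bar>a j - a (Suc j)\<bar>)"
    using path_even[of 1 k a] assms by blast
  have "\<bar>2 * a k\<bar> \<le> \<bar>a k - a n\<bar> + \<bar>a n + a 1\<bar> + \<bar>a 1 - a k\<bar>" by simp
  thus ?thesis using p1 p2 s by simp
qed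

theorem mainTheorem11:
  fixes n :: nat
    and xi1 :: "'l \<Rightarrow> nat \<Rightarrow> bool \<Rightarrow> real"
    and xi2 :: "'l \<Rightarrow> nat \<Rightarrow> bool \<Rightarrow> bool \<Rightarrow> real"
  assumes n3: "n \<ge> 3"
    and xi1_nonneg: "\<And>l i x. i \<in> {1..n} \<Longrightarrow> xi1 l i x \<ge> 0"
    and xi1_norm: "\<And>l i. i \<in> {1..n} \<Longrightarrow> xi1 l i False + xi1 l i True = 1"
    and xi2_nonneg: "\<And>l i x y. i \<in> {1..n} \<Longrightarrow> xi2 l i x y \<ge> 0"
    and xi2_norm: "\<And>l i. i \<in> {1..n} \<Longrightarrow>
        xi2 l i False False + xi2 l i False True + xi2 l i True False + xi2 l i True True = 1"
    and marg1: "\<And>l i x. i \<in> {1..n} \<Longrightarrow> xi2 l i x False + xi2 l i x True = xi1 l i x"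
    and marg2: "\<And>l i y. i \<in> {1..n} \<Longrightarrow> xi2 l i False y + xi2 l i True y = xi1 l (nxt n i) y"
  shows "\<forall>l. (odd n \<longrightarrow>
              xi_anti n (xi2 l) \<le> 1 - (1 / real n ^ 2) * (\<Sum>i=1..n. eta (xi1 l) i))
          \<and> (even n \<longrightarrow>
              xi_chained n (xi2 l) \<le> 1 - (1 / real n ^ 2) * (\<Sum>i=1..n. eta (xi1 l) i))"
proof (intro allI conjI impI)
  fix l
  define a where "a j = xi1 l j True - xi1 l j False" for j
  have npos: "real n > 0" using n3 by simp
  have nxt1: "nxt n i = Suc i" if "1 \<le> i" "i < n" for i using that by (simp add: nxt_def)
  have nxtn: "nxt n n = 1" by (simp add: nxt_def)
  have eta_a: "eta (xi1 l) i = \<bar>a i\<bar>" if "i \<in> {1..n}" for i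
    using xi1_norm[OF that, of l] unfolding eta_def a_def by (simp add: max_def)
  have neq_b: "xi_neq (xi2 l) i \<le> 1 - \<bar>a i + a (nxt n i)\<bar> / 2" if i: "i \<in> {1..n}" for i
    using xi2_norm[OF i, of l] marg1[OF i, of l True] marg1[OF i, of l False] marg2[OF i, of l True] marg2[OF i, of l False]
      xi2_nonneg[OF i, of l True True] xi2_nonneg[OF i, of l False False]
    unfolding xi_neq_def a_def
    by (auto simp: abs_if field_simps)
  have eq_b: "xi_eq (xi2 l) i \<le> 1 - \<bar>a i - a (nxt n i)\<bar> / 2" if i: "i \<in> {1..n}" for i
    using xi2_norm[OF i, of l] marg1[OF i, of l True] marg1[OF i, of l False] marg2[OF i, of l True] marg2[OF i, of l False]
      xi2_nonneg[OF i, of l True False] xi2_nonneg[OF i, of l False True]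
    unfolding xi_eq_def a_def
    by (auto simp: abs_if field_simps)
  have sumeta: "(\<Sum>i=1..n. eta (xi1 l) i) = (\<Sum>i=1..n. \<bar>a i\<bar>)"
    using eta_a by (rule sum.cong[OF refl])
  have split: "(\<Sum>i=1..n. f i) = (\<Sum>i=1..<n. f i) + f n" for f :: "nat \<Rightarrow> real"
    using n3 by (simp add: atLeastLessThanSuc_atLeastAtMost[symmetric] sum.atLeastLessThan_Suc
        del: atLeastLessThanSuc_atLeastAtMost) 
  show "xi_anti n (xi2 l) \<le> 1 - 1 / real n ^ 2 * (\<Sum>i=1..n. eta (xi1 l) i)" if odd: "odd n"
  proof -
    define D where "D = (\<Sum>j=1..<n. \<bar>a j + a (Suc j)\<bar>) + \<bar>a n + a 1\<bar>"
    have "(\<Sum>i=1..n. xi_neq (xi2 l) i) \<le> (\<Sum>i=1..n. 1 - \<bar>a i + a (nxt n i)\<bar> / 2)"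
      by (rule sum_mono) (rule neq_b)
    also have "\<dots> = real n - D / 2"
    proof -
      have "(\<Sum>i=1..<n. \<bar>a i + a (nxt n i)\<bar>) = (\<Sum>i=1..<n. \<bar>a i + a (Suc i)\<bar>)"
        by (rule sum.cong) (auto simp: nxt1)
      moreover have "(\<Sum>i=1..n. \<bar>a i + a (nxt n i)\<bar>) = (\<Sum>i=1..<n. \<bar>a i + a (nxt n i)\<bar>) + \<bar>a n + a 1\<bar>"
        using split[of "\<lambda>i. \<bar>a i + a (nxt n i)\<bar>"] nxtn by simp
      ultimately have "(\<Sum>i=1..n. \<bar>a i + a (nxt n i)\<bar>) = D" unfolding D_def by simp
      then show ?thesis
        by (simp add: sum_subtractf sum_divide_distrib[symmetric])
    qed
    finally have A: "(\<Sum>i=1..n. xi_neq (xi2 l) i) \<le> real n - D / 2" .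
    have "(\<Sum>i=1..n. 2 * \<bar>a i\<bar>) \<le> (\<Sum>i=1..n. D)"
      by (rule sum_mono) (use cyc_odd[OF _ _ odd] D_def in auto)
    hence B: "2 * (\<Sum>i=1..n. \<bar>a i\<bar>) \<le> real n * D" by (simp add: sum_distrib_left)
    have "xi_anti n (xi2 l) \<le> (real n - D/2) / real n"
      unfolding xi_anti_def using A npos by (simp add: divide_right_mono)
    also have "\<dots> \<le> 1 - 1 / real n ^ 2 * (\<Sum>i=1..n. \<bar>a i\<bar>)"
      using B npos by (simp add: field_simps power2_eq_square)
    finally show ?thesis using sumeta by simp
  qed
  show "xi_chained n (xi2 l) \<le> 1 - 1 / real n ^ 2 * (\<Sum>i=1..n. eta (xi1 l) i)" if ev: "even n"
  proof -
    define D where "D = (\<Sum>j=1..<n. \<bar>a j - a (Suc j)\<bar>) + \<bar>a n + a 1\<bar>"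
    have "(\<Sum>i=1..n-1. xi_eq (xi2 l) i) \<le> (\<Sum>i=1..<n. 1 - \<bar>a i - a (Suc i)\<bar> / 2)"
    proof -
      have "{1..n-1} = {1..<n}" using n3 by auto
      moreover have "(\<Sum>i=1..<n. xi_eq (xi2 l) i) \<le> (\<Sum>i=1..<n. 1 - \<bar>a i - a (Suc i)\<bar> / 2)"
        by (rule sum_mono) (use eq_b nxt1 in force)
      ultimately show ?thesis by simp
    qed
    moreover have "xi_neq (xi2 l) n \<le> 1 - \<bar>a n + a 1\<bar> / 2"
      using neq_b[of n] n3 nxtn by simp
    ultimately have A: "(\<Sum>i=1..n-1. xi_eq (xi2 l) i) + xi_neq (xi2 l) n \<le> real n - D / 2"
      unfolding D_def using n3
      by (simp add: sum_subtractf sum_divide_distrib[symmetric] add_divide_distrib)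
    have "(\<Sum>i=1..n. 2 * \<bar>a i\<bar>) \<le> (\<Sum>i=1..n. D)"
      by (rule sum_mono) (use cyc_even D_def in auto)
    hence B: "2 * (\<Sum>i=1..n. \<bar>a i\<bar>) \<le> real n * D" by (simp add: sum_distrib_left)
    have "xi_chained n (xi2 l) = ((\<Sum>i=1..n-1. xi_eq (xi2 l) i) + xi_neq (xi2 l) n) / real n"
      unfolding xi_chained_def by (simp add: add_divide_distrib)
    also have "\<dots> \<le> (real n - D/2) / real n"
      using A npos by (simp add: divide_right_mono)
    also have "\<dots> \<le> 1 - 1 / real n ^ 2 * (\<Sum>i=1..n. \<bar>a i\<bar>)"
      using B npos by (simp add: field_simps power2_eq_square)
    finally show ?thesis using sumeta by simp
  qed
qed

end
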